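(* Let $l\ge2$ and $1\le i\le l-1$ be integers, and let $\beta_1,\dots,\beta_i,\eta$ be real numbers in $(0,1)$ with $\eta=1-(\beta_1+\cdots+\beta_i)$; write $\overline{\boldsymbol\beta}=(\beta_1,\dots,\beta_i,\eta)$. Then there exist constants $C,N$ depending only on $\overline{\boldsymbol\beta}$ such that for all integers $n\ge N$ and all integers $d>1$, $$\frac{1}{d^{l-1}}\sum_{1\le h_1,\dots,h_i\le d-1}\Big|\beta_1 e\big(\tfrac{h_1}{d}\big)+\cdots+\beta_i e\big(\tfrac{h_i}{d}\big)+\eta\Big|^n\le C\,\frac{\log n}{\sqrt n},$$ where $e(x)=e^{2\pi i x}$. *)

theory Defs
  imports Complex_Main "HOL-Library.FuncSet"
begin

definition e :: "real \<Rightarrow> complex" where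
  "e x = exp (2 * of_real pi * \<i> * of_real x)"

end

theory Submission
  imports Defs
begin

lemma e_cis: "e x = cis (2 * pi * x)"
  unfolding e_def cis_conv_exp by (simp add: mult_ac)

lemma normA:
  fixes b t x :: real
  assumes "0 < b" "0 < t" "b + t \<le> 1"
  shows "cmod (of_real b * cis x + of_real t) \<le> b + t - b * t * (1 - cos x)"
proof -
  have sq: "(cmod (of_real b * cis x + of_real t))^2 = b^2 + t^2 + 2*b*t*cos x"
  proof -
    have 1: "(cmod (of_real b * cis x + of_real t))^2 = (Re (of_real b * cis x + of_real t))^2 + (Im (of_real b * cis x + of_real t))^2"
      by (rule cmod_power2)
    have 2: "(Re (of_real b * cis x + of_real t))^2 + (Im (of_real b * cis x + of_real t))^2 = (b * cos x + t)^2 + (b * sin x)^2" by simp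
    have 3: "(b * cos x + t)^2 + (b * sin x)^2 = b^2 * sin x ^2 + b^2 * cos x^2 + t^2 + 2*b*t*cos x"
      by (simp add: power2_eq_square algebra_simps)
    have 4: "b^2 * sin x ^2 + b^2 * cos x^2 = b^2"
      by (metis distrib_left mult_1_right sin_cos_squared_add)
    show ?thesis using 1 2 3 4 by linarith
  qed
  have c1: "cos x \<le> 1" "-1 \<le> cos x" by auto
  have bt: "4*b*t \<le> (b+t)^2" using sum_squares_ge_zero[of "b-t" 0]
    by (simp add: power2_eq_square algebra_simps)
  have "b*t \<le> 1/4" using bt power_le_one[of "b+t" 2] assms by linarith
  define y where "y = 2*b*t*(1 - cos x)"
  have y0: "0 \<le> y" unfolding y_def using assms c1 by simp
  have y4: "y \<le> 4*b*t"
  proof -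
    have "2*b*t*(1 - cos x) \<le> 2*b*t*2" using assms c1 by (intro mult_left_mono) auto
    then show ?thesis unfolding y_def by simp
  qed
  have r: "b + t - b * t * (1 - cos x) = (b+t) - y/2" unfolding y_def by simp
  have "(b+t)^2 \<le> b+t" unfolding power2_eq_square using assms by (intro mult_left_le) auto
  then have rnn: "0 \<le> (b+t) - y/2" using y4 bt assms by linarith
  have "(cmod (of_real b * cis x + of_real t))^2 \<le> ((b+t) - y/2)^2"
  proof -
    have "((b+t) - y/2)^2 = (b+t)^2 - (b+t)*y + y^2/4" by (simp add: power2_eq_square algebra_simps)
    moreover have "(b+t)*y \<le> y" using y0 assms by (simp add: mult_left_le_one_le)
    moreover have "b^2 + t^2 + 2*b*t*cos x = (b+t)^2 - y" unfolding y_def by (simp add: power2_eq_square algebra_simps)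
    ultimately show ?thesis using sq zero_le_power2[of y] by linarith
  qed
  then show ?thesis unfolding r using rnn by (rule power2_le_imp_le)
qed

lemma sin_lower:
  fixes y :: real assumes "0 \<le> y" "y \<le> 1/2"
  shows "y / 2 \<le> sin (pi * y)"
proof -
  define x where "x = pi * y"
  have x0: "0 \<le> x" unfolding x_def using assms by simp
  have x2: "x \<le> 2" unfolding x_def using assms pi_less_4 mult_mono[of pi 4 y "1/2"] by simp
  have "\<bar>sin x - (\<Sum>m<3. sin_coeff m * x ^ m)\<bar> \<le> inverse (fact 3) * \<bar>x\<bar> ^ 3"
    by (rule Maclaurin_sin_bound)
  moreover have "(\<Sum>m<3. sin_coeff m * x ^ m) = x"
    by (simp add: numeral_3_eq_3 sin_coeff_def lessThan_Suc)
  ultimately have "\<bar>sin x - x\<bar> * 6 \<le> x^3" using x0 by (simp add: fact_numeral)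
  then have "sin x \<ge> x - x^3/6" 
  proof -
    have "x - sin x \<le> \<bar>sin x - x\<bar>" by simp
    then have "(x - sin x) * 6 \<le> x^3" using \<open>\<bar>sin x - x\<bar> * 6 \<le> x^3\<close> mult_right_mono[of "x - sin x" "\<bar>sin x - x\<bar>" 6] by simp
    then show ?thesis by simp
  qed
  moreover have "x^3 \<le> 4 * x"
  proof -
    have "x^2 \<le> 2^2" by (rule power_mono[OF x2 x0])
    then have "x * x^2 \<le> x * 4" using x0 by (intro mult_left_mono) auto
    then show ?thesis by (simp add: power3_eq_cube power2_eq_square mult_ac)
  qed
  ultimately have "sin x \<ge> x/3" by linarith
  moreover have "x/3 \<ge> y/2" unfolding x_def using assms pi_ge_two mult_right_mono[of 2 pi y] by linarith
  ultimately show ?thesis unfolding x_def by linarith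
qed

lemma card_small:
  fixes x :: real and d :: nat assumes "0 \<le> x"
  shows "real (card {j\<in>{1..d-1}. real j \<le> x}) \<le> x"
proof -
  have "{j\<in>{1..d-1}. real j \<le> x} \<subseteq> {1..nat \<lfloor>x\<rfloor>}"
  proof
    fix j assume "j \<in> {j\<in>{1..d-1}. real j \<le> x}"
    then have "1 \<le> j" "of_int (int j) \<le> x" by auto
    then have "int j \<le> \<lfloor>x\<rfloor>" by (simp add: le_floor_iff)
    then show "j \<in> {1..nat \<lfloor>x\<rfloor>}" using \<open>1 \<le> j\<close> by auto
  qed
  then have "card {j\<in>{1..d-1}. real j \<le> x} \<le> nat \<lfloor>x\<rfloor>"
    using card_mono[of "{1..nat \<lfloor>x\<rfloor>}"] by fastforce
  then have "real (card {j\<in>{1..d-1}. real j \<le> x}) \<le> real (nat \<lfloor>x\<rfloor>)" by linarith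
  also have "\<dots> = of_int \<lfloor>x\<rfloor>" using assms by simp
  also have "\<dots> \<le> x" by simp
  finally show ?thesis .
qed

lemma card_small2:
  fixes x :: real and d :: nat assumes "0 \<le> x"
  shows "real (card {j\<in>{1..d-1}. real (d - j) \<le> x}) \<le> x"
proof -
  have "{j\<in>{1..d-1}. real (d - j) \<le> x} \<subseteq> (\<lambda>j. d - j) ` {j\<in>{1..d-1}. real j \<le> x}"
  proof
    fix j assume j: "j \<in> {j\<in>{1..d-1}. real (d - j) \<le> x}"
    then have "d - j \<in> {j\<in>{1..d-1}. real j \<le> x}" "j = d - (d - j)" by auto
    then show "j \<in> (\<lambda>j. d - j) ` {j\<in>{1..d-1}. real j \<le> x}" by blast
  qed
  then have "card {j\<in>{1..d-1}. real (d - j) \<le> x} \<le> card ((\<lambda>j. d - j) ` {j\<in>{1..d-1}. real j \<le> x})"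
    by (intro card_mono) auto
  also have "\<dots> \<le> card {j\<in>{1..d-1}. real j \<le> x}" by (rule card_image_le) auto
  finally show ?thesis using card_small[OF assms, of d] by linarith
qed

lemma sum_PiE_first:
  fixes f :: "nat \<Rightarrow> real"
  assumes "1 \<le> i" "finite A"
  shows "(\<Sum>h\<in>PiE {1..i} (\<lambda>_. A). f (h 1)) = real (card A) ^ (i - 1) * (\<Sum>j\<in>A. f j)"
proof -
  define F where "F = (\<lambda>x y. if x = (1::nat) then f y else 1)"
  have "(\<Prod>x\<in>{1..i}. \<Sum>y\<in>A. F x y) = (\<Sum>h\<in>PiE {1..i} (\<lambda>_. A). \<Prod>x\<in>{1..i}. F x (h x))"
    by (rule prod_sum_PiE) (use assms in auto)
  also have "\<dots> = (\<Sum>h\<in>PiE {1..i} (\<lambda>_. A). f (h 1))"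
  proof (rule sum.cong)
    fix h
    have "(\<Prod>x\<in>{1..i}. F x (h x)) = F 1 (h 1) * (\<Prod>x\<in>{Suc 1..i}. F x (h x))"
      using assms by (simp add: prod.atLeast_Suc_atMost)
    also have "(\<Prod>x\<in>{Suc 1..i}. F x (h x)) = 1" by (intro prod.neutral) (auto simp: F_def)
    finally show "(\<Prod>x\<in>{1..i}. F x (h x)) = f (h 1)" by (simp add: F_def)
  qed simp
  finally have 1: "(\<Sum>h\<in>PiE {1..i} (\<lambda>_. A). f (h 1)) = (\<Prod>x\<in>{1..i}. \<Sum>y\<in>A. F x y)" by simp
  have "(\<Prod>x\<in>{1..i}. \<Sum>y\<in>A. F x y) = (\<Sum>y\<in>A. F 1 y) * (\<Prod>x\<in>{Suc 1..i}. \<Sum>y\<in>A. F x y)"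
    using assms by (simp add: prod.atLeast_Suc_atMost)
  also have "(\<Prod>x\<in>{Suc 1..i}. \<Sum>y\<in>A. F x y) = (\<Prod>x\<in>{Suc 1..i}. real (card A))"
    by (intro prod.cong) (auto simp: F_def)
  also have "\<dots> = real (card A) ^ (i - 1)" by simp
  finally show ?thesis using 1 by (simp add: F_def)
qed

lemma bound_S:
  fixes \<beta> :: "nat \<Rightarrow> real" and \<theta> :: "nat \<Rightarrow> real"
  assumes "1 \<le> i" "\<forall>k\<in>{1..i}. 0 < \<beta> k \<and> \<beta> k < 1"
    and "\<eta> = 1 - (\<Sum>k=1..i. \<beta> k)" "0 < \<eta>"
  shows "cmod ((\<Sum>k=1..i. of_real (\<beta> k) * e (\<theta> k)) + of_real \<eta>)
          \<le> 1 - \<beta> 1 * \<eta> * (1 - cos (2 * pi * \<theta> 1))"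
proof -
  have s1: "(\<Sum>k=1..i. of_real (\<beta> k) * e (\<theta> k)) = of_real (\<beta> 1) * e (\<theta> 1) + (\<Sum>k=Suc 1..i. of_real (\<beta> k) * e (\<theta> k))"
    using assms(1) by (simp add: sum.atLeast_Suc_atMost)
  have s2: "(\<Sum>k=1..i. \<beta> k) = \<beta> 1 + (\<Sum>k=Suc 1..i. \<beta> k)"
    using assms(1) by (simp add: sum.atLeast_Suc_atMost)
  have b1: "0 < \<beta> 1" using assms(1,2) by auto
  have rest0: "0 \<le> (\<Sum>k=Suc 1..i. \<beta> k)"
  proof (intro sum_nonneg)
    fix k assume "k \<in> {Suc 1..i}"
    then have "k \<in> {1..i}" by auto
    then show "0 \<le> \<beta> k" using assms(2) less_imp_le by blast
  qed
  have nr: "cmod (\<Sum>k=Suc 1..i. of_real (\<beta> k) * e (\<theta> k)) \<le> (\<Sum>k=Suc 1..i. \<beta> k)"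
  proof -
    have "cmod (\<Sum>k=Suc 1..i. of_real (\<beta> k) * e (\<theta> k)) \<le> (\<Sum>k=Suc 1..i. cmod (of_real (\<beta> k) * e (\<theta> k)))"
      by (rule norm_sum)
    also have "\<dots> = (\<Sum>k=Suc 1..i. \<beta> k)"
    proof (rule sum.cong)
      fix k assume "k \<in> {Suc 1..i}"
      then have "0 < \<beta> k" using assms(2) by auto
      then show "cmod (of_real (\<beta> k) * e (\<theta> k)) = \<beta> k" by (simp add: norm_mult e_cis)
    qed simp
    finally show ?thesis .
  qed
  have n1: "cmod (of_real (\<beta> 1) * e (\<theta> 1) + of_real \<eta>) \<le> \<beta> 1 + \<eta> - \<beta> 1 * \<eta> * (1 - cos (2 * pi * \<theta> 1))"
    unfolding e_cis by (rule normA) (use b1 assms s2 rest0 in auto)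
  have "cmod ((\<Sum>k=1..i. of_real (\<beta> k) * e (\<theta> k)) + of_real \<eta>)
      = cmod ((of_real (\<beta> 1) * e (\<theta> 1) + of_real \<eta>) + (\<Sum>k=Suc 1..i. of_real (\<beta> k) * e (\<theta> k)))"
    unfolding s1 by (simp add: algebra_simps)
  also have "\<dots> \<le> cmod (of_real (\<beta> 1) * e (\<theta> 1) + of_real \<eta>) + cmod (\<Sum>k=Suc 1..i. of_real (\<beta> k) * e (\<theta> k))"
    by (rule norm_triangle_ineq)
  finally show ?thesis using n1 nr s2 assms(3) by linarith
qed

lemma oneD:
  fixes c :: real and n d :: nat
  assumes "0 < c" "c \<le> 1" "1 < d" "3 \<le> n"
  shows "(\<Sum>j\<in>{1..d-1}. (1 - c * sin (pi * (real j / real d))^2)^n) \<le> 4 * sqrt (ln n / (c * n)) * d + d / n"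
proof -
  define \<epsilon> where "\<epsilon> = sqrt (ln n / (c * n))"
  define \<delta> where "\<delta> = 2 * \<epsilon>"
  have npos: "0 < real n" using assms by simp
  have lnpos: "0 \<le> ln (real n)" using assms by simp
  have e0: "0 \<le> \<epsilon>" unfolding \<epsilon>_def using lnpos assms npos by simp
  have esq: "\<epsilon>^2 = ln n / (c * n)" unfolding \<epsilon>_def using lnpos assms npos by simp
  have esq2: "real n * (c * \<epsilon>^2) = ln n" unfolding esq using assms npos by (simp add: field_simps)
  define g where "g = (\<lambda>j::nat. 1 - c * sin (pi * (real j / real d))^2)"
  have tm: "g j ^ n \<le> of_bool (real j \<le> \<delta> * d) + of_bool (real (d - j) \<le> \<delta> * d) + 1 / n"
    if j: "j \<in> {1..d-1}" for j
  proof -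
    have s2: "sin (pi * (real j / real d))^2 \<le> 1" by (simp add: abs_sin_le_one abs_square_le_1)
    have g0: "0 \<le> g j" unfolding g_def using s2 assms mult_mono[of c 1 "sin (pi * (real j / real d))^2" 1] by simp
    have g1: "g j \<le> 1" unfolding g_def using assms by simp
    show ?thesis
    proof (cases "real j \<le> \<delta> * d \<or> real (d - j) \<le> \<delta> * d")
      case True
      have "g j ^ n \<le> 1" using g0 g1 by (rule power_le_one)
      moreover have "0 \<le> 1 / real n" by simp
      moreover have "(1::real) \<le> of_bool (real j \<le> \<delta> * d) + of_bool (real (d - j) \<le> \<delta> * d)"
        using True by auto
      ultimately show ?thesis by linarith
    next
      case False
      have dpos: "0 < real d" using assms by simp
      have jd: "j < d" "1 \<le> j" using j assms by auto
      have aux: "\<And>y s. 2*\<epsilon> < y \<Longrightarrow> y/2 \<le> s \<Longrightarrow> \<epsilon> < s" by linarith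
      have "\<epsilon> < sin (pi * (real j / real d))"
      proof (cases "2 * j \<le> d")
        case True
        have y: "0 \<le> real j / real d" "real j / real d \<le> 1/2" using True dpos by (auto simp: field_simps)
        have "\<delta> < real j / real d" using False dpos by (simp add: field_simps)
        then show ?thesis using sin_lower[OF y] aux unfolding \<delta>_def by blast
      next
        case False': False
        have rd: "real (d - j) = real d - real j" using jd by simp
        have y: "0 \<le> real (d - j) / real d" "real (d - j) / real d \<le> 1/2" using False' dpos jd rd by (auto simp: field_simps)
        have "\<delta> < real (d - j) / real d" using False dpos by (simp add: field_simps)
        moreover have "sin (pi * (real (d - j) / real d)) = sin (pi * (real j / real d))"
        proof -
          have "pi * (real (d - j) / real d) = pi - pi * (real j / real d)" using dpos rd by (simp add: field_simps)
          then show ?thesis by simp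
        qed
        ultimately show ?thesis using sin_lower[OF y] aux unfolding \<delta>_def by metis
      qed
      then have "\<epsilon>^2 \<le> sin (pi * (real j / real d))^2" using e0 by (intro power_mono) auto
      then have "g j \<le> 1 - c * \<epsilon>^2" unfolding g_def using assms by (simp add: mult_left_mono)
      also have "\<dots> \<le> exp (- (c * \<epsilon>^2))" using exp_ge_add_one_self[of "- (c * \<epsilon>^2)"] by simp
      finally have "g j ^ n \<le> exp (- (c * \<epsilon>^2)) ^ n" using g0 by (intro power_mono) auto
      also have "\<dots> = exp (real n * (- (c * \<epsilon>^2)))" by (rule exp_of_nat_mult[symmetric])
      also have "\<dots> = 1 / real n" using esq2 npos by (simp add: exp_minus exp_ln inverse_eq_divide)
      finally show ?thesis by simp
    qed
  qed
  have fin: "finite {1..d-1}" by simp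
  have "(\<Sum>j\<in>{1..d-1}. g j ^ n) \<le> (\<Sum>j\<in>{1..d-1}. of_bool (real j \<le> \<delta> * d) + of_bool (real (d - j) \<le> \<delta> * d) + 1 / real n)"
    by (rule sum_mono) (rule tm)
  also have "\<dots> = real (card {j\<in>{1..d-1}. real j \<le> \<delta> * d}) + real (card {j\<in>{1..d-1}. real (d - j) \<le> \<delta> * d}) + real (d - 1) / real n"
    by (simp add: sum.distrib Int_def Collect_conj_eq[symmetric])
  also have "\<dots> \<le> \<delta> * d + \<delta> * d + real d / real n"
  proof -
    have "0 \<le> \<delta> * d" unfolding \<delta>_def using e0 by simp
    moreover have "real (d - 1) / real n \<le> real d / real n" using npos by (intro divide_right_mono) auto
    ultimately show ?thesis using card_small[of "\<delta> * d" d] card_small2[of "\<delta> * d" d] by linarith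
  qed
  finally show ?thesis unfolding g_def \<delta>_def \<epsilon>_def by (simp add: mult_ac)
qed

lemma final_arith:
  fixes c :: real and n :: nat
  assumes "0 < c" "3 \<le> n"
  shows "4 * sqrt (ln n / (c * n)) + 1 / n \<le> (4 / sqrt c + 1) * ln (real n) / sqrt (real n)"
proof -
  have npos: "0 < real n" using assms by simp
  have "exp 1 \<le> real n" using exp_le assms by linarith
  then have ln1: "1 \<le> ln (real n)" using npos by (metis ln_exp ln_le_cancel_iff exp_gt_zero)
  have sl: "sqrt (ln n) \<le> ln n"
  proof -
    have "sqrt (ln n) * 1 \<le> sqrt (ln n) * sqrt (ln n)" using ln1 by (intro mult_left_mono) auto
    also have "\<dots> = ln n" using ln1 by simp
    finally show ?thesis by simp
  qed
  have "sqrt (ln n / (c * n)) = sqrt (ln n) / (sqrt c * sqrt n)" by (simp add: real_sqrt_divide real_sqrt_mult)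
  also have "\<dots> \<le> ln n / (sqrt c * sqrt n)" using sl assms npos by (intro divide_right_mono) auto
  finally have a: "4 * sqrt (ln n / (c * n)) \<le> (4 / sqrt c) * ln n / sqrt n" by simp
  have sn: "1 \<le> sqrt (real n)" using npos assms by simp
  have "1 / real n \<le> 1 / sqrt n"
  proof -
    have "sqrt n * 1 \<le> sqrt n * sqrt n" using sn by (intro mult_left_mono) auto
    then have "sqrt n \<le> n" using npos by simp
    then show ?thesis using sn by (intro divide_left_mono) auto
  qed
  also have "\<dots> \<le> ln n / sqrt n" using ln1 sn by (intro divide_right_mono) auto
  finally have b: "1 / real n \<le> ln n / sqrt n" .
  have "(4 / sqrt c + 1) * ln (real n) / sqrt (real n) = (4 / sqrt c) * ln n / sqrt n + ln n / sqrt n"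
    by (simp only: distrib_right add_divide_distrib mult_1_left)
  then show ?thesis using a b by linarith
qed

theorem lemma2p3:
  fixes i :: nat and \<beta> :: "nat \<Rightarrow> real" and \<eta> :: real
  assumes "i \<ge> 1"
    and "\<forall>k\<in>{1..i}. 0 < \<beta> k \<and> \<beta> k < 1"
    and "\<eta> = 1 - (\<Sum>k=1..i. \<beta> k)"
    and "0 < \<eta>" and "\<eta> < 1"
  shows "\<exists>C N. \<forall>l n d :: nat. 2 \<le> l \<and> i \<le> l - 1 \<and> N \<le> n \<and> 1 < d \<longrightarrow>
           (1 / real d ^ (l - 1)) *
             (\<Sum>h\<in>PiE {1..i} (\<lambda>_. {1..d-1}).
                cmod ((\<Sum>k=1..i. of_real (\<beta> k) * e (real (h k) / real d)) + of_real \<eta>) ^ n)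
           \<le> C * ln (real n) / sqrt (real n)"
proof -
  define c where "c = 2 * \<beta> 1 * \<eta>"
  have b1: "0 < \<beta> 1" using assms(1,2) by auto
  have s2: "(\<Sum>k=1..i. \<beta> k) = \<beta> 1 + (\<Sum>k=Suc 1..i. \<beta> k)"
    using assms(1) by (simp add: sum.atLeast_Suc_atMost)
  have rest0: "0 \<le> (\<Sum>k=Suc 1..i. \<beta> k)"
  proof (intro sum_nonneg)
    fix k assume "k \<in> {Suc 1..i}"
    then have "k \<in> {1..i}" by auto
    then show "0 \<le> \<beta> k" using assms(2) less_imp_le by blast
  qed
  have bt1: "\<beta> 1 + \<eta> \<le> 1" using s2 rest0 assms(3) by linarith
  have c0: "0 < c" unfolding c_def using b1 assms by simp
  have "4 * \<beta> 1 * \<eta> \<le> (\<beta> 1 + \<eta>)^2" using sum_squares_ge_zero[of "\<beta> 1 - \<eta>" 0]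
    by (simp add: power2_eq_square algebra_simps)
  moreover have "(\<beta> 1 + \<eta>)^2 \<le> 1" using bt1 b1 assms(4) by (intro power_le_one) auto
  ultimately have c1: "c \<le> 1" unfolding c_def by linarith
  show ?thesis
  proof (intro exI allI impI)
    fix l n d :: nat
    assume H: "2 \<le> l \<and> i \<le> l - 1 \<and> 3 \<le> n \<and> 1 < d"
    define g where "g = (\<lambda>j::nat. 1 - c * sin (pi * (real j / real d))^2)"
    define S where "S = (\<lambda>h::nat\<Rightarrow>nat. cmod ((\<Sum>k=1..i. of_real (\<beta> k) * e (real (h k) / real d)) + of_real \<eta>))"
    define \<epsilon> where "\<epsilon> = sqrt (ln n / (c * n))"
    have dpos: "0 < real d" using H by simp
    have pt: "S h ^ n \<le> g (h 1) ^ n" for h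
    proof -
      have "S h \<le> 1 - \<beta> 1 * \<eta> * (1 - cos (2 * pi * (real (h 1) / real d)))"
        unfolding S_def using bound_S[OF assms(1,2,3,4), of "\<lambda>k. real (h k) / real d"] by simp
      also have "\<dots> = g (h 1)"
        unfolding g_def c_def using cos_double_sin[of "pi * (real (h 1) / real d)"] by (simp add: mult_ac)
      finally show ?thesis unfolding S_def by (intro power_mono) auto
    qed
    have "(\<Sum>h\<in>PiE {1..i} (\<lambda>_. {1..d-1}). S h ^ n) \<le> (\<Sum>h\<in>PiE {1..i} (\<lambda>_. {1..d-1}). g (h 1) ^ n)"
      by (intro sum_mono pt)
    also have "\<dots> = real (d - 1) ^ (i - 1) * (\<Sum>j\<in>{1..d-1}. g j ^ n)"
      using sum_PiE_first[OF assms(1), of "{1..d-1}" "\<lambda>j. g j ^ n"] by simp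
    also have "\<dots> \<le> real (d - 1) ^ (i - 1) * (4 * \<epsilon> * d + d / n)"
      using oneD[OF c0 c1, of d n] H unfolding g_def \<epsilon>_def by (intro mult_left_mono) auto
    also have "\<dots> = (real (d - 1) ^ (i - 1) * d) * (4 * \<epsilon> + 1 / n)" by (simp add: field_simps)
    finally have A: "(\<Sum>h\<in>PiE {1..i} (\<lambda>_. {1..d-1}). S h ^ n) \<le> (real (d - 1) ^ (i - 1) * d) * (4 * \<epsilon> + 1 / n)" .
    have e0: "0 \<le> 4 * \<epsilon> + 1 / n" unfolding \<epsilon>_def using c0 H by simp
    have "real (d - 1) ^ (i - 1) * d \<le> real d ^ (i - 1) * d"
      using H by (intro mult_right_mono power_mono) auto
    also have "\<dots> = real d ^ i" using assms(1) by (metis Suc_diff_1 less_le_trans power_Suc2 zero_less_one)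
    also have "\<dots> \<le> real d ^ (l - 1)" using H by (intro power_increasing) auto
    finally have B: "real (d - 1) ^ (i - 1) * d \<le> real d ^ (l - 1)" .
    have "(1 / real d ^ (l - 1)) * (\<Sum>h\<in>PiE {1..i} (\<lambda>_. {1..d-1}). S h ^ n)
        \<le> (1 / real d ^ (l - 1)) * ((real (d - 1) ^ (i - 1) * d) * (4 * \<epsilon> + 1 / n))"
      using A dpos by (intro mult_left_mono) auto
    also have "\<dots> \<le> (1 / real d ^ (l - 1)) * (real d ^ (l - 1) * (4 * \<epsilon> + 1 / n))"
      using B e0 dpos by (intro mult_left_mono mult_right_mono) auto
    also have "\<dots> = 4 * \<epsilon> + 1 / n" using dpos by simp
    also have "\<dots> \<le> (4 / sqrt c + 1) * ln (real n) / sqrt (real n)"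
      unfolding \<epsilon>_def using final_arith[OF c0, of n] H by simp
    finally show "(1 / real d ^ (l - 1)) *
             (\<Sum>h\<in>PiE {1..i} (\<lambda>_. {1..d-1}).
                cmod ((\<Sum>k=1..i. of_real (\<beta> k) * e (real (h k) / real d)) + of_real \<eta>) ^ n)
           \<le> (4 / sqrt c + 1) * ln (real n) / sqrt (real n)" unfolding S_def .
  qed
qed

end
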